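(* (1) Let $\mu>0$, $\rho>0$, and let $(x^*,s^* )\in\mathbb{R}^n\times\mathbb{R}^m$ be a local solution of the minimax problem $\min_{x\in\mathbb{R}^n}\max_{s\in\mathbb{R}^m}F(x,s;\mu,\rho)$, in the sense that $x^*$ is a local minimizer of $F(\cdot,s^*;\mu,\rho)$ and $s^*$ is a local maximizer of $F(x^*,\cdot;\mu,\rho)$. Then $$\nabla f(x^* )-\nabla c(x^* )s^*=0,\qquad c(x^* )-z^*=0,$$ where $z^*=z(x^*,s^*;\mu,\rho)$. (2) Let $\rho>0$ and suppose $(x^*,s^* )$ satisfies $\nabla f(x^* )-\nabla c(x^* )s^*=0$ and $c(x^* )-z^*=0$ with $z^*=z(x^*,s^*;0,\rho)$, i.e. $z_i^*=\frac{1}{2\rho}\big(|s_i^*-\rho c_i(x^* )|-(s_i^*-\rho c_i(x^* ))\big)$. Then $(x^*,s^* )$ is a KKT pair of problem (P): $\min f(x)$ s.t. $c(x)\ge0$, i.e. $\nabla f(x^* )-\nabla c(x^* )s^*=0$, $c(x^* )\ge 0$, $s^*\ge 0$, $c_i(x^* )s_i^*=0$ for all $i$.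
   Context: Let $f:\mathbb{R}^n\to\mathbb{R}$ and $c=(c_1,\dots,c_m):\mathbb{R}^n\to\mathbb{R}^m$ be twice continuously differentiable; $\nabla c(x)\in\mathbb{R}^{n\times m}$ denotes the matrix whose $i$-th column is $\nabla c_i(x)$. For parameters $\mu\ge0$, $\rho>0$ and variables $x\in\mathbb{R}^n$, $s\in\mathbb{R}^m$, define for $i=1,\dots,m$: $z_i(x,s;\mu,\rho)=\frac{1}{2\rho}\big(\sqrt{(s_i-\rho c_i(x))^2+4\rho\mu}-(s_i-\rho c_i(x))\big)$, $y_i(x,s;\mu,\rho)=\frac{1}{2\rho}\big(\sqrt{(s_i-\rho c_i(x))^2+4\rho\mu}+(s_i-\rho c_i(x))\big)$, and, for $\mu>0$, $h_i(x,s;\mu,\rho)=-\mu\ln z_i(x,s;\mu,\rho)+\frac{\rho}{2}y_i(x,s;\mu,\rho)^2-\frac{1}{2\rho}s_i^2$ and the augmented Lagrangian $F(x,s;\mu,\rho)=f(x)+\sum_{i=1}^m h_i(x,s;\mu,\rho)$. *)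

theory Defs
  imports "HOL-Analysis.Analysis"
begin

definition zfun :: "('n \<Rightarrow> real^'m) \<Rightarrow> real \<Rightarrow> real \<Rightarrow> 'n \<Rightarrow> real^'m \<Rightarrow> 'm \<Rightarrow> real" where
  "zfun c \<mu> \<rho> x s i =
     (sqrt ((s $ i - \<rho> * (c x $ i))^2 + 4 * \<rho> * \<mu>) - (s $ i - \<rho> * (c x $ i))) / (2 * \<rho>)"

definition yfun :: "('n \<Rightarrow> real^'m) \<Rightarrow> real \<Rightarrow> real \<Rightarrow> 'n \<Rightarrow> real^'m \<Rightarrow> 'm \<Rightarrow> real" where
  "yfun c \<mu> \<rho> x s i =
     (sqrt ((s $ i - \<rho> * (c x $ i))^2 + 4 * \<rho> * \<mu>) + (s $ i - \<rho> * (c x $ i))) / (2 * \<rho>)"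

definition hfun :: "('n \<Rightarrow> real^'m) \<Rightarrow> real \<Rightarrow> real \<Rightarrow> 'n \<Rightarrow> real^'m \<Rightarrow> 'm \<Rightarrow> real" where
  "hfun c \<mu> \<rho> x s i =
     - \<mu> * ln (zfun c \<mu> \<rho> x s i) + \<rho> / 2 * (yfun c \<mu> \<rho> x s i)^2 - (s $ i)^2 / (2 * \<rho>)"

definition Ffun :: "('n \<Rightarrow> real) \<Rightarrow> ('n \<Rightarrow> real^'m::finite) \<Rightarrow> real \<Rightarrow> real \<Rightarrow> 'n \<Rightarrow> real^'m \<Rightarrow> real" where
  "Ffun f c \<mu> \<rho> x s = f x + (\<Sum>i\<in>UNIV. hfun c \<mu> \<rho> x s i)"

definition C2_with_grad :: "(real^'n \<Rightarrow> real) \<Rightarrow> (real^'n \<Rightarrow> real^'n) \<Rightarrow> bool" where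
  "C2_with_grad \<phi> g \<longleftrightarrow>
     (\<forall>x. (\<phi> has_derivative (\<lambda>h. g x \<bullet> h)) (at x)) \<and>
     (\<exists>H :: real^'n \<Rightarrow> real^'n^'n. (\<forall>x. (g has_derivative (\<lambda>h. H x *v h)) (at x)) \<and> continuous_on UNIV H)"

definition KKT_pair :: "(real^'n \<Rightarrow> real^'n) \<Rightarrow> ('m::finite \<Rightarrow> real^'n \<Rightarrow> real^'n) \<Rightarrow> (real^'n \<Rightarrow> real^'m)
     \<Rightarrow> real^'n \<Rightarrow> real^'m \<Rightarrow> bool" where
  "KKT_pair gf gc c x s \<longleftrightarrow>
     gf x - (\<Sum>i\<in>UNIV. s $ i *\<^sub>R gc i x) = 0 \<and>
     (\<forall>i. c x $ i \<ge> 0) \<and> (\<forall>i. s $ i \<ge> 0) \<and> (\<forall>i. c x $ i * s $ i = 0)"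

end

theory Submission
  imports Defs
begin

definition Hs :: "real \<Rightarrow> real \<Rightarrow> real \<Rightarrow> real" where
  "Hs \<mu> \<rho> a = - \<mu> * ln ((sqrt (a^2 + 4*\<rho>*\<mu>) - a) / (2*\<rho>)) + \<rho>/2 * ((sqrt (a^2 + 4*\<rho>*\<mu>) + a) / (2*\<rho>))^2"

lemma sqrt_gt_abs: assumes "\<mu> > 0" "\<rho> > 0" shows "sqrt (a^2 + 4*\<rho>*\<mu>) > \<bar>a\<bar>"
proof -
  have "sqrt (a^2) < sqrt (a^2 + 4*\<rho>*\<mu>)" using assms by (intro real_sqrt_less_mono) auto
  thus ?thesis by simp
qed

lemma Hs_deriv:
  assumes "\<mu> > 0" "\<rho> > 0"
  shows "(Hs \<mu> \<rho> has_real_derivative ((sqrt (a^2 + 4*\<rho>*\<mu>) + a) / (2*\<rho>))) (at a)"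
proof -
  define r where "r = sqrt (a^2 + 4*\<rho>*\<mu>)"
  have rgt: "r > \<bar>a\<bar>" using sqrt_gt_abs[OF assms] r_def by simp
  have q: "a^2 + 4*\<rho>*\<mu> > 0" using assms by (simp add: add_nonneg_pos)
  have r2: "r^2 = a^2 + 4*\<rho>*\<mu>" using q r_def by simp
  have zpos: "(r - a)/(2*\<rho>) > 0" using rgt assms by auto
  have dr: "((\<lambda>a. sqrt (a^2 + 4*\<rho>*\<mu>)) has_real_derivative a / r) (at a)"
    using q unfolding r_def
    by (auto intro!: derivative_eq_intros simp: field_simps power2_eq_square)
  have dz: "((\<lambda>a. (sqrt (a^2 + 4*\<rho>*\<mu>) - a)/(2*\<rho>)) has_real_derivative (a/r - 1)/(2*\<rho>)) (at a)"
    using DERIV_cdivide[OF DERIV_diff[OF dr DERIV_ident], of "2*\<rho>"] by simp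
  have dy: "((\<lambda>a. (sqrt (a^2 + 4*\<rho>*\<mu>) + a)/(2*\<rho>)) has_real_derivative (a/r + 1)/(2*\<rho>)) (at a)"
    using DERIV_cdivide[OF DERIV_add[OF dr DERIV_ident], of "2*\<rho>"] by simp
  have dl: "((\<lambda>a. ln ((sqrt (a^2 + 4*\<rho>*\<mu>) - a)/(2*\<rho>))) has_real_derivative ((a/r - 1)/(2*\<rho>)) / ((r - a)/(2*\<rho>))) (at a)"
    using DERIV_chain2[OF DERIV_ln_divide[OF zpos[unfolded r_def]] dz] r_def assms by simp
  have D: "((\<lambda>a. - \<mu> * ln ((sqrt (a^2 + 4*\<rho>*\<mu>) - a) / (2*\<rho>)) + \<rho>/2 * ((sqrt (a^2 + 4*\<rho>*\<mu>) + a) / (2*\<rho>))^2) has_real_derivative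
      (- \<mu> * (((a/r - 1)/(2*\<rho>)) / ((r - a)/(2*\<rho>))) + \<rho>/2 * (of_nat 2 * ((a/r + 1)/(2*\<rho>) * ((sqrt (a^2 + 4*\<rho>*\<mu>) + a)/(2*\<rho>))^(2 - Suc 0))))) (at a)"
    by (rule DERIV_add[OF DERIV_cmult[OF dl, of "-\<mu>"] DERIV_cmult[OF DERIV_power[OF dy, of 2], of "\<rho>/2"]])
  have E: "(- \<mu> * (((a/r - 1)/(2*\<rho>)) / ((r - a)/(2*\<rho>))) + \<rho>/2 * (of_nat 2 * ((a/r + 1)/(2*\<rho>) * ((sqrt (a^2 + 4*\<rho>*\<mu>) + a)/(2*\<rho>))^(2 - Suc 0))))
     = (r + a)/(2*\<rho>)"
  proof -
    have rne: "r \<noteq> 0" "r - a \<noteq> 0" using rgt by auto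
    have sq: "sqrt (a^2 + 4*\<rho>*\<mu>) = r" by (simp add: r_def)
    have "(- \<mu> * (((a/r - 1)/(2*\<rho>)) / ((r - a)/(2*\<rho>))) + \<rho>/2 * (of_nat 2 * ((a/r + 1)/(2*\<rho>) * ((sqrt (a^2 + 4*\<rho>*\<mu>) + a)/(2*\<rho>))^(2 - Suc 0))))
        = \<mu> / r + (r+a)^2/(4*\<rho>*r)"
      unfolding sq using rne assms by (simp add: field_simps power2_eq_square)
    also have "... = (4*\<rho>*\<mu> + (r+a)^2)/(4*\<rho>*r)" using rne assms by (simp add: field_simps)
    also have "4*\<rho>*\<mu> + (r+a)^2 = 2*r*(r+a)" using r2 by (simp add: power2_eq_square algebra_simps)
    also have "2*r*(r+a)/(4*\<rho>*r) = (r + a)/(2*\<rho>)" using rne assms by (simp add: field_simps)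
    finally show ?thesis .
  qed
  have D': "((\<lambda>a. - \<mu> * ln ((sqrt (a^2 + 4*\<rho>*\<mu>) - a) / (2*\<rho>)) + \<rho>/2 * ((sqrt (a^2 + 4*\<rho>*\<mu>) + a) / (2*\<rho>))^2) has_real_derivative (r + a)/(2*\<rho>)) (at a)"
    using D unfolding E .
  show ?thesis using D' unfolding r_def Hs_def[abs_def] .
qed

lemma hfun_eq: "hfun c \<mu> \<rho> x s i = Hs \<mu> \<rho> (s$i - \<rho> * c x $ i) - (s$i)^2/(2*\<rho>)"
  unfolding hfun_def zfun_def yfun_def Hs_def by simp

lemma part2:
  assumes "\<rho> > 0" "\<forall>i. c xs $ i - zfun c 0 \<rho> xs ss i = 0"
  shows "c xs $ i \<ge> 0 \<and> ss $ i \<ge> 0 \<and> c xs $ i * ss $ i = 0"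
proof -
  define a where "a = ss$i - \<rho> * c xs $ i"
  have "c xs $ i = (\<bar>a\<bar> - a)/(2*\<rho>)" using assms(2)[rule_format, of i]
    unfolding zfun_def a_def by simp
  hence h: "2*\<rho>* c xs $ i = \<bar>a\<bar> - a" using assms(1) by (simp add: field_simps)
  show ?thesis
  proof (cases "a \<ge> 0")
    case True
    then have "c xs $ i = 0" using h assms(1) by simp
    thus ?thesis using True a_def by simp
  next
    case False
    then have "\<rho> * c xs $ i = - a" using h by simp
    hence "ss $ i = 0" using a_def by simp
    moreover have "c xs $ i = - a / \<rho>" using \<open>\<rho> * c xs $ i = - a\<close> assms(1) by (simp add: field_simps)
    moreover have "- a / \<rho> \<ge> 0" using False assms(1) by (simp add: divide_le_0_iff)
    ultimately show ?thesis by simp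
  qed
qed

theorem theorem3p1:
  fixes f :: "real^'n \<Rightarrow> real" and c :: "real^'n \<Rightarrow> real^'m"
    and gf :: "real^'n \<Rightarrow> real^'n" and gc :: "'m \<Rightarrow> real^'n \<Rightarrow> real^'n"
  assumes f_C2: "C2_with_grad f gf"
    and c_C2: "\<forall>i. C2_with_grad (\<lambda>x. c x $ i) (gc i)"
  shows
   "(\<forall>\<mu> \<rho> xs ss. \<mu> > 0 \<and> \<rho> > 0
       \<and> (\<exists>e>0. \<forall>x. dist x xs < e \<longrightarrow> Ffun f c \<mu> \<rho> xs ss \<le> Ffun f c \<mu> \<rho> x ss)
       \<and> (\<exists>e>0. \<forall>s. dist s ss < e \<longrightarrow> Ffun f c \<mu> \<rho> xs s \<le> Ffun f c \<mu> \<rho> xs ss)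
     \<longrightarrow> gf xs - (\<Sum>i\<in>UNIV. ss $ i *\<^sub>R gc i xs) = 0
       \<and> (\<forall>i. c xs $ i - zfun c \<mu> \<rho> xs ss i = 0))
  \<and> (\<forall>\<rho> xs ss. \<rho> > 0
       \<and> gf xs - (\<Sum>i\<in>UNIV. ss $ i *\<^sub>R gc i xs) = 0
       \<and> (\<forall>i. c xs $ i - zfun c 0 \<rho> xs ss i = 0)
     \<longrightarrow> KKT_pair gf gc c xs ss)"
proof (intro conjI)
 show "\<forall>\<rho> xs ss. \<rho> > 0
       \<and> gf xs - (\<Sum>i\<in>UNIV. ss $ i *\<^sub>R gc i xs) = 0
       \<and> (\<forall>i. c xs $ i - zfun c 0 \<rho> xs ss i = 0)
     \<longrightarrow> KKT_pair gf gc c xs ss"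
 proof (intro allI impI)
  fix \<rho> :: real and xs :: "real^'n" and ss :: "real^'m"
  assume A: "\<rho> > 0 \<and> gf xs - (\<Sum>i\<in>UNIV. ss $ i *\<^sub>R gc i xs) = 0 \<and> (\<forall>i. c xs $ i - zfun c 0 \<rho> xs ss i = 0)"
  show "KKT_pair gf gc c xs ss" unfolding KKT_pair_def using A part2[of \<rho> c xs ss] by blast
 qed
next
 show "\<forall>\<mu> \<rho> xs ss. \<mu> > 0 \<and> \<rho> > 0
       \<and> (\<exists>e>0. \<forall>x. dist x xs < e \<longrightarrow> Ffun f c \<mu> \<rho> xs ss \<le> Ffun f c \<mu> \<rho> x ss)
       \<and> (\<exists>e>0. \<forall>s. dist s ss < e \<longrightarrow> Ffun f c \<mu> \<rho> xs s \<le> Ffun f c \<mu> \<rho> xs ss)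
     \<longrightarrow> gf xs - (\<Sum>i\<in>UNIV. ss $ i *\<^sub>R gc i xs) = 0
       \<and> (\<forall>i. c xs $ i - zfun c \<mu> \<rho> xs ss i = 0)"
 proof (intro allI impI)
  fix \<mu> \<rho> :: real and xs :: "real^'n" and ss :: "real^'m"
  assume A: "0 < \<mu> \<and> 0 < \<rho> \<and> (\<exists>e>0. \<forall>x. dist x xs < e \<longrightarrow> Ffun f c \<mu> \<rho> xs ss \<le> Ffun f c \<mu> \<rho> x ss) \<and>
       (\<exists>e>0. \<forall>s. dist s ss < e \<longrightarrow> Ffun f c \<mu> \<rho> xs s \<le> Ffun f c \<mu> \<rho> xs ss)"
  then have mu: "\<mu> > 0" and rho: "\<rho> > 0" by auto
  from A obtain e1 where e1: "e1 > 0" "\<forall>x. dist x xs < e1 \<longrightarrow> Ffun f c \<mu> \<rho> xs ss \<le> Ffun f c \<mu> \<rho> x ss" by auto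
  from A obtain e2 where e2: "e2 > 0" "\<forall>s. dist s ss < e2 \<longrightarrow> Ffun f c \<mu> \<rho> xs s \<le> Ffun f c \<mu> \<rho> xs ss" by auto
  define Y where "Y j = (sqrt ((ss$j - \<rho> * c xs $ j)^2 + 4*\<rho>*\<mu>) + (ss$j - \<rho> * c xs $ j)) / (2*\<rho>)" for j
  have cz: "c xs $ i = zfun c \<mu> \<rho> xs ss i" for i
  proof -
    define \<phi> where "\<phi> t = Ffun f c \<mu> \<rho> xs (ss + t *\<^sub>R axis i 1)" for t
    have comp: "(ss + t *\<^sub>R axis i 1) $ j = ss $ j + (if j = i then t else 0)" for t j
      by (simp add: axis_def)
    have phi: "\<phi> t = f xs + (\<Sum>j\<in>UNIV. Hs \<mu> \<rho> (ss $ j + (if j = i then t else 0) - \<rho> * c xs $ j)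
                   - (ss $ j + (if j = i then t else 0))^2/(2*\<rho>))" for t
      unfolding \<phi>_def Ffun_def hfun_eq comp ..
    have dj: "((\<lambda>t. Hs \<mu> \<rho> (ss $ j + (if j = i then t else 0) - \<rho> * c xs $ j)
                   - (ss $ j + (if j = i then t else 0))^2/(2*\<rho>)) has_real_derivative
              (if j = i then Y i - ss $ i / \<rho> else 0)) (at 0)" for j
    proof (cases "j = i")
      case True
      have d1: "((\<lambda>t. ss $ i + t - \<rho> * c xs $ i) has_real_derivative 1) (at 0)"
        by (auto intro!: derivative_eq_intros)
      have d2: "((\<lambda>t. Hs \<mu> \<rho> (ss $ i + t - \<rho> * c xs $ i)) has_real_derivative Y i * 1) (at 0)"
        using DERIV_chain2[OF Hs_deriv[OF mu rho, of "ss $ i + 0 - \<rho> * c xs $ i"] d1] unfolding Y_def by simp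
      have d3: "((\<lambda>t. (ss $ i + t)^2/(2*\<rho>)) has_real_derivative ss $ i / \<rho>) (at 0)"
        using rho by (auto intro!: derivative_eq_intros simp: field_simps)
      show ?thesis using DERIV_diff[OF d2 d3] True by simp
    next
      case False
      then show ?thesis by simp
    qed
    have "(\<phi> has_real_derivative (0 + (\<Sum>j\<in>UNIV. (if j = i then Y i - ss $ i / \<rho> else 0)))) (at 0)"
      unfolding phi[abs_def] by (intro DERIV_add DERIV_const DERIV_sum dj)
    hence dphi: "(\<phi> has_real_derivative (Y i - ss $ i / \<rho>)) (at 0)" by simp
    have "\<forall>t. \<bar>0 - t\<bar> < e2 \<longrightarrow> \<phi> t \<le> \<phi> 0"
    proof (intro allI impI)
      fix t :: real assume "\<bar>0 - t\<bar> < e2"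
      moreover have "dist (ss + t *\<^sub>R axis i 1) ss = \<bar>t\<bar>" by (simp add: dist_norm)
      ultimately show "\<phi> t \<le> \<phi> 0" unfolding \<phi>_def using e2(2) by simp
    qed
    from DERIV_local_max[OF dphi e2(1) this] have "Y i - ss $ i / \<rho> = 0" .
    hence "\<rho> * (sqrt ((ss$i - \<rho> * c xs $ i)^2 + 4*\<rho>*\<mu>)) = \<rho> * (ss $ i + \<rho> * c xs $ i)"
      unfolding Y_def using rho by (simp add: field_simps)
    hence "sqrt ((ss$i - \<rho> * c xs $ i)^2 + 4*\<rho>*\<mu>) = ss $ i + \<rho> * c xs $ i" using rho by simp
    thus ?thesis unfolding zfun_def using rho by (simp add: field_simps)
  qed
  have C2: "\<forall>i. c xs $ i - zfun c \<mu> \<rho> xs ss i = 0" using cz by simp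
  have Ys: "\<rho> * Y j = ss $ j" for j
  proof -
    have "c xs $ j = (sqrt ((ss$j - \<rho> * c xs $ j)^2 + 4*\<rho>*\<mu>) - (ss$j - \<rho> * c xs $ j)) / (2*\<rho>)"
      using cz[of j] unfolding zfun_def .
    hence "sqrt ((ss$j - \<rho> * c xs $ j)^2 + 4*\<rho>*\<mu>) = ss $ j + \<rho> * c xs $ j"
      using rho by (simp add: field_simps)
    thus ?thesis unfolding Y_def using rho by simp
  qed
  define G where "G = gf xs - (\<Sum>i\<in>UNIV. ss $ i *\<^sub>R gc i xs)"
  define g where "g x = Ffun f c \<mu> \<rho> x ss" for x
  have gx: "g = (\<lambda>x. f x + (\<Sum>j\<in>UNIV. Hs \<mu> \<rho> (ss$j - \<rho> * c x $ j) - (ss$j)^2/(2*\<rho>)))"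
    unfolding g_def[abs_def] Ffun_def hfun_eq ..
  have fd: "(f has_derivative (\<lambda>h. gf xs \<bullet> h)) (at xs)" using f_C2 unfolding C2_with_grad_def by blast
  have hd: "((\<lambda>x. Hs \<mu> \<rho> (ss$j - \<rho> * c x $ j) - (ss$j)^2/(2*\<rho>)) has_derivative
              (\<lambda>h. Y j * (0 - \<rho> * (gc j xs \<bullet> h)) - 0)) (at xs)" for j
  proof -
    have cd: "((\<lambda>x. c x $ j) has_derivative (\<lambda>h. gc j xs \<bullet> h)) (at xs)"
      using c_C2 unfolding C2_with_grad_def by blast
    have inner: "((\<lambda>x. ss$j - \<rho> * c x $ j) has_derivative (\<lambda>h. 0 - \<rho> * (gc j xs \<bullet> h))) (at xs)"
      by (intro has_derivative_diff has_derivative_const has_derivative_mult_right cd)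
    have outer: "(Hs \<mu> \<rho> has_derivative (*) (Y j)) (at (ss$j - \<rho> * c xs $ j))"
      using Hs_deriv[OF mu rho, of "ss$j - \<rho> * c xs $ j"] unfolding has_field_derivative_def Y_def .
    show ?thesis by (intro has_derivative_diff has_derivative_const has_derivative_compose[OF inner outer])
  qed
  have gd: "(g has_derivative (\<lambda>h. gf xs \<bullet> h + (\<Sum>j\<in>UNIV. Y j * (0 - \<rho> * (gc j xs \<bullet> h)) - 0))) (at xs)"
    unfolding gx by (intro has_derivative_add fd has_derivative_sum hd)
  have "(\<lambda>h. gf xs \<bullet> h + (\<Sum>j\<in>UNIV. Y j * (0 - \<rho> * (gc j xs \<bullet> h)) - 0)) = (\<lambda>v. 0)"
  proof (rule differential_zero_maxmin[OF _ open_ball gd])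
    show "xs \<in> ball xs e1" using e1 by simp
    show "(\<forall>y\<in>ball xs e1. g y \<le> g xs) \<or> (\<forall>y\<in>ball xs e1. g xs \<le> g y)"
      using e1(2) unfolding g_def by (auto simp: dist_commute)
  qed
  hence "gf xs \<bullet> G + (\<Sum>j\<in>UNIV. Y j * (0 - \<rho> * (gc j xs \<bullet> G)) - 0) = 0" by meson
  moreover have "(\<Sum>j\<in>UNIV. Y j * (0 - \<rho> * (gc j xs \<bullet> G)) - 0) = - (\<Sum>j\<in>UNIV. ss $ j * (gc j xs \<bullet> G))"
    by (simp add: sum_negf[symmetric] Ys[symmetric] mult.assoc mult.left_commute)
  ultimately have "G \<bullet> G = 0"
    unfolding G_def[of] by (simp add: inner_diff_left inner_sum_left)
  hence C1: "G = 0" by simp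
  note C1 = C1[unfolded G_def]
  show "gf xs - (\<Sum>i\<in>UNIV. ss $ i *\<^sub>R gc i xs) = 0 \<and> (\<forall>i. c xs $ i - zfun c \<mu> \<rho> xs ss i = 0)"
    using C1 C2 by blast
 qed
qed

end
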